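(* Let $(X,\|\cdot\|)$ be a normed space and let $M\subset X$ be c-porous. Then $M$ is strongly lower porous, i.e. for every $x\in M$, $2\liminf_{r\to0^+}\frac{\gamma(x,r,M)}{r}=1$.
   Context: For $x\in X$, $r>0$, $B(x,r)=\{y\in X\colon\|x-y\|<r\}$. For $E\subset X$, $x\in X$, $R>0$, let $\gamma(x,R,E)=\sup\{r>0\colon \exists z\in X,\ B(z,r)\subset B(x,R)\setminus E\}$. The lower porosity of $E$ at $x$ is $2\liminf_{r\to0^+}\gamma(x,r,E)/r$; $E$ is strongly lower porous if its lower porosity equals $1$ at each point of $E$. A set $M\subset X$ is c-porous if for every $x\in X$ and every $r>0$ there exist $y\in B(x,r)$ and a non-zero continuous linear functional $\phi\colon X\to\mathbb R$ such that $\{z\in X\colon\phi(z)>\phi(y)\}\cap M=\emptyset$. *)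

theory Defs
  imports "HOL-Analysis.Analysis"
begin

definition porosity_gamma :: "'a::real_normed_vector \<Rightarrow> real \<Rightarrow> 'a set \<Rightarrow> real" where
  "porosity_gamma x R E = Sup {r. r > 0 \<and> (\<exists>z. ball z r \<subseteq> ball x R - E)}"

definition lower_porosity :: "'a::real_normed_vector set \<Rightarrow> 'a \<Rightarrow> ereal" where
  "lower_porosity E x = 2 * Liminf (at_right 0) (\<lambda>r. ereal (porosity_gamma x r E / r))"

definition strongly_lower_porous :: "'a::real_normed_vector set \<Rightarrow> bool" where
  "strongly_lower_porous E \<longleftrightarrow> (\<forall>x\<in>E. lower_porosity E x = 1)"

definition c_porous :: "'a::real_normed_vector set \<Rightarrow> bool" where
  "c_porous M \<longleftrightarrow> (\<forall>x. \<forall>r>0. \<exists>y\<in>ball x r. \<exists>\<phi>::'a \<Rightarrow> real.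
      bounded_linear \<phi> \<and> \<phi> \<noteq> (\<lambda>_. 0) \<and> {z. \<phi> z > \<phi> y} \<inter> M = {})"

end

theory Submission
  imports Defs
begin

lemma onorm_le_nn:
  fixes f :: "'a::real_normed_vector \<Rightarrow> 'b::real_normed_vector"
  assumes "\<And>x. norm (f x) \<le> b * norm x" "b \<ge> 0"
  shows "onorm f \<le> b"
  unfolding onorm_def
proof (rule cSup_least)
  show "range (\<lambda>x. norm (f x) / norm x) \<noteq> {}" by simp
  fix y assume "y \<in> range (\<lambda>x. norm (f x) / norm x)"
  then obtain x where y: "y = norm (f x) / norm x" by auto
  show "y \<le> b"
  proof (cases "x = 0")
    case True then show ?thesis using y assms(2) by simp
  next
    case False
    then have "norm x > 0" by simp
    then show ?thesis using y assms(1)[of x] by (simp add: divide_le_eq)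
  qed
qed

lemma norming_vector:
  fixes \<phi> :: "'a::real_normed_vector \<Rightarrow> real"
  assumes bl: "bounded_linear \<phi>" and b: "0 \<le> b" "b < onorm \<phi>"
  shows "\<exists>u. norm u = 1 \<and> \<phi> u > b"
proof -
  have "\<exists>w. norm (\<phi> w) > b * norm w"
  proof (rule ccontr)
    assume "\<not> ?thesis"
    then have "\<And>w. norm (\<phi> w) \<le> b * norm w" by (simp add: not_less)
    then have "onorm \<phi> \<le> b" using onorm_le_nn b(1) by blast
    with b(2) show False by simp
  qed
  then obtain w where w: "\<bar>\<phi> w\<bar> > b * norm w" by auto
  have "w \<noteq> 0" using w b(1) bl by (auto simp: linear_simps)
  then have nw: "norm w > 0" by simp
  define w' where "w' = (if \<phi> w < 0 then - w else w)"
  have pw: "\<phi> w' = \<bar>\<phi> w\<bar>" "norm w' = norm w"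
    using bl by (auto simp: w'_def linear_simps)
  define u where "u = w' /\<^sub>R norm w"
  have "norm u = 1" using nw pw by (simp add: u_def)
  moreover have "\<phi> u = \<bar>\<phi> w\<bar> / norm w"
    using bl pw by (simp add: u_def linear_simps divide_inverse mult.commute)
  moreover have "\<bar>\<phi> w\<bar> / norm w > b" using w nw by (simp add: pos_less_divide_eq)
  ultimately show ?thesis by auto
qed

lemma ball_upper:
  fixes x z :: "'a::real_normed_vector"
  assumes sub: "ball z r \<subseteq> ball x R - M" and xM: "x \<in> M" and r: "r > 0"
  shows "2 * r \<le> R"
proof -
  have "x \<notin> ball z r" using sub xM by auto
  then have d: "dist z x \<ge> r" by (simp add: dist_commute)
  then have zx: "z \<noteq> x" using r by auto
  define e where "e = (z - x) /\<^sub>R norm (z - x)"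
  have ne: "norm e = 1" using zx by (simp add: e_def)
  have "norm (z - x) + t < R" if t: "0 \<le> t" "t < r" for t
  proof -
    have "z + t *\<^sub>R e \<in> ball z r" using t ne by (simp add: dist_norm)
    then have "z + t *\<^sub>R e \<in> ball x R" using sub by auto
    then have "norm (z + t *\<^sub>R e - x) < R" by (simp add: dist_norm norm_minus_commute)
    moreover have "z + t *\<^sub>R e - x = (norm (z - x) + t) *\<^sub>R e"
    proof -
      have "(norm (z - x) + t) * inverse (norm (z - x)) = 1 + t * inverse (norm (z - x))"
        using zx by (simp add: field_simps)
      then show ?thesis by (simp add: e_def scaleR_add_left algebra_simps)
    qed
    moreover have "norm ((norm (z - x) + t) *\<^sub>R e) = norm (z - x) + t"
      using ne t by simp
    ultimately show ?thesis by simp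
  qed
  note key = this
  have "norm (z - x) + r \<le> R"
  proof (rule ccontr)
    assume c: "\<not> ?thesis"
    define t where "t = max 0 (R - norm (z - x))"
    have "0 \<le> t" "t < r" using c r by (auto simp: t_def)
    from key[OF this] show False by (simp add: t_def)
  qed
  with d show ?thesis by (simp add: dist_norm)
qed

lemma ball_lower:
  fixes x :: "'a::real_normed_vector"
  assumes cp: "c_porous M" and xM: "x \<in> M" and t: "0 < t" "t < R / 2"
  shows "\<exists>z. ball z t \<subseteq> ball x R - M"
proof -
  define \<eta> where "\<eta> = R / 2 - t"
  have eta: "\<eta> > 0" using t by (simp add: \<eta>_def)
  define \<kappa> where "\<kappa> = min (1/2) (\<eta> / (4 * t))"
  have k: "\<kappa> > 0" "\<kappa> \<le> 1/2" "\<kappa> * t \<le> \<eta> / 4"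
    using eta t by (auto simp: \<kappa>_def min_def field_simps)
  have e4: "\<eta>/4 > 0" using eta by simp
  obtain y where y: "y \<in> ball x (\<eta>/4)" and "\<exists>\<phi>::'a \<Rightarrow> real.
      bounded_linear \<phi> \<and> \<phi> \<noteq> (\<lambda>_. 0) \<and> {z. \<phi> z > \<phi> y} \<inter> M = {}"
    using cp[unfolded c_porous_def, rule_format, OF e4, of x] by blast
  then obtain \<phi> :: "'a \<Rightarrow> real" where bl: "bounded_linear \<phi>"
    and nz: "\<phi> \<noteq> (\<lambda>_. 0)" and hs: "{z. \<phi> z > \<phi> y} \<inter> M = {}"
    by blast
  define N where "N = onorm \<phi>"
  have N: "N > 0" using nz bl onorm_pos_lt[OF bl] by (auto simp: N_def)
  obtain u where u: "norm u = 1" "\<phi> u > N * (1 - \<kappa>)"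
    using norming_vector[OF bl, of "N * (1 - \<kappa>)"] N k by (auto simp: N_def)
  have phb: "\<And>v. \<bar>\<phi> v\<bar> \<le> N * norm v" using onorm[OF bl] by (simp add: N_def)
  have xy: "\<phi> x \<le> \<phi> y"
  proof (rule ccontr)
    assume "\<not> ?thesis"
    then have "x \<in> {z. \<phi> z > \<phi> y} \<inter> M" using xM by auto
    then show False using hs by blast
  qed
  have dxy: "norm (x - y) < \<eta>/4" using y by (simp add: dist_norm)
  define z where "z = x + (R/2) *\<^sub>R u"
  show ?thesis
  proof (intro exI subsetI)
    fix w assume w: "w \<in> ball z t"
    define v where "v = w - z"
    have nv: "norm v < t" using w by (simp add: v_def dist_norm norm_minus_commute)
    have wx: "w = x + (R/2) *\<^sub>R u + v" by (simp add: v_def z_def)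
    have "norm (w - x) \<le> R/2 + norm v"
      using wx u t norm_triangle_ineq[of "(R/2) *\<^sub>R u" v] by simp
    then have inR: "w \<in> ball x R" using nv t by (simp add: dist_norm norm_minus_commute)
    have lin: "\<phi> w = \<phi> x + (R/2) * \<phi> u + \<phi> v"
      using bl wx by (simp add: linear_simps)
    have a1: "\<phi> v \<ge> - (N * norm v)" using phb[of v] by simp
    have a2: "N * norm v < N * t" using N nv by simp
    have a3: "\<phi> (x - y) \<ge> - (N * norm (x - y))" using phb[of "x - y"] by simp
    have a4: "N * norm (x - y) \<le> N * (\<eta>/4)" using N dxy by simp
    have a5: "(R/2) * \<phi> u \<ge> (R/2) * (N * (1 - \<kappa>))" using u t by simp
    have a6: "(R/2) * (N * (1 - \<kappa>)) = N * (t + \<eta>) - N * (\<kappa> * t) - N * (\<kappa> * \<eta>)"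
      unfolding \<eta>_def by (simp add: field_simps)
    have a7: "N * (\<kappa> * t) \<le> N * (\<eta>/4)" using N k by simp
    have a8: "N * (\<kappa> * \<eta>) \<le> N * (\<eta>/2)" using N k eta by simp
    have a9: "N * (t + \<eta>) = N * t + N * \<eta>" "N * (\<eta>/4) = (N * \<eta>) / 4"
      "N * (\<eta>/2) = (N * \<eta>) / 2" by (simp_all add: algebra_simps)
    have "\<phi> (x - y) = \<phi> x - \<phi> y" using bl by (simp add: linear_simps)
    then have "\<phi> w > \<phi> y" using lin a1 a2 a3 a4 a5 a6 a7 a8 a9 by linarith
    then have "w \<notin> M" using hs by auto
    then show "w \<in> ball x R - M" using inR by simp
  qed
qed

lemma gamma_eq:
  fixes x :: "'a::real_normed_vector"
  assumes cp: "c_porous M" and xM: "x \<in> M" and R: "R > 0"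
  shows "porosity_gamma x R M = R / 2"
proof -
  define S where "S = {r. r > 0 \<and> (\<exists>z. ball z r \<subseteq> ball x R - M)}"
  have ub: "r \<le> R/2" if "r \<in> S" for r
  proof -
    from that obtain z where "r > 0" "ball z r \<subseteq> ball x R - M" unfolding S_def by blast
    from ball_upper[OF this(2) xM this(1)] show ?thesis by simp
  qed
  have mem: "t \<in> S" if t0: "0 < t" and t1: "t < R/2" for t
  proof -
    obtain z where "ball z t \<subseteq> ball x R - M" using ball_lower[OF cp xM t0 t1] by blast
    then show ?thesis using t0 unfolding S_def by blast
  qed
  have "R/4 \<in> S" using R by (intro mem) auto
  then have ne: "S \<noteq> {}" by blast
  have bdd: "bdd_above S" by (rule bdd_aboveI[of _ "R/2"]) (rule ub)
  have le: "Sup S \<le> R/2" by (rule cSup_least[OF ne]) (use ub in auto)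
  have ge: "t \<le> Sup S" if "0 < t" "t < R/2" for t
    using cSup_upper[OF mem[OF that] bdd] .
  have "R/2 \<le> Sup S"
  proof (rule dense_le_bounded[of "R/4"])
    show "R/4 < R/2" using R by simp
  next
    fix w assume "R/4 < w" "w < R/2"
    then show "w \<le> Sup S" using ge R by simp
  qed
  with le have "Sup S = R/2" by simp
  then show ?thesis unfolding porosity_gamma_def S_def by simp
qed

theorem corollary2p3:
  fixes M :: "'a::real_normed_vector set"
  assumes "c_porous M"
  shows "strongly_lower_porous M"
  unfolding strongly_lower_porous_def
proof
  fix x assume xM: "x \<in> M"
  have ev: "eventually (\<lambda>r. ereal (porosity_gamma x r M / r) = ereal (1/2)) (at_right (0::real))"
    by (rule eventually_at_rightI[of 0 1]) (auto simp: gamma_eq[OF assms xM])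
  have "Liminf (at_right (0::real)) (\<lambda>r. ereal (porosity_gamma x r M / r)) = ereal (1/2)"
    using Liminf_eq[OF ev] Liminf_const[OF trivial_limit_at_right_real] by simp
  then show "lower_porosity M x = 1" unfolding lower_porosity_def by simp
qed

end
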